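(* Consider the Int-GARCH(1,1,1) model: for integers $t$, $$r_t=h_t\cdot[\epsilon_t-\eta_t,\ \epsilon_t+\eta_t]=[\lambda_t-\delta_t,\ \lambda_t+\delta_t],\qquad \lambda_t=h_t\epsilon_t,\ \delta_t=h_t\eta_t,$$ $$h_t=\mu+\alpha_1|\lambda_{t-1}|+\beta_1\delta_{t-1}+\gamma_1h_{t-1},$$ where $\mu>0$, $\alpha_1,\beta_1,\gamma_1>0$ are constants, $\{\epsilon_t\}$ are i.i.d. $N(0,1)$, $\{\eta_t\}$ are i.i.d. $\Gamma(k,1)$ (shape $k>0$, scale $1$), the two sequences are mutually independent, and $(\epsilon_t,\eta_t)$ is independent of $\{h_s: s\le t\}$. Put $x_t=\alpha_1|\epsilon_t|+\beta_1\eta_t+\gamma_1$, so that $h_t=\mu+x_{t-1}h_{t-1}$. Assume $\{r_t\}$ starts from its infinite past with a finite mean (the recursion is started in the infinite past from a value with finite expectation). Then $E h_t<\infty$ if and only if $E x_t<1$, i.e. $$\alpha_1\sqrt{2/\pi}+\beta_1k+\gamma_1<1.$$ When this condition holds, $$E h_t=\frac{\mu}{1-\alpha_1\sqrt{2/\pi}-\beta_1k-\gamma_1},\qquad E r_t=\bigl[-kE(h_t),\ kE(h_t)\bigr].$$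
   Context: Here $\cdot$ denotes scalar multiplication of an interval, $[a,b]\cdot c=\{cx: x\in[a,b]\}$ for $c\ge 0$. The expectation of a random interval $r_t=[\lambda_t-\delta_t,\lambda_t+\delta_t]$ is its Aumann expectation, which for intervals equals $E(r_t)=[E\lambda_t-E\delta_t,\ E\lambda_t+E\delta_t]$. *)

theory Defs
  imports "HOL-Probability.Probability"
begin

definition gamma_density :: "real \<Rightarrow> real \<Rightarrow> real" where
  "gamma_density k x = (if 0 < x then x powr (k - 1) * exp (- x) / Gamma k else 0)"

definition garch_x :: "real \<Rightarrow> real \<Rightarrow> real \<Rightarrow> (int \<Rightarrow> 'a \<Rightarrow> real) \<Rightarrow> (int \<Rightarrow> 'a \<Rightarrow> real)
    \<Rightarrow> int \<Rightarrow> 'a \<Rightarrow> real" where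
  "garch_x a1 b1 g1 eps eta t \<omega> = a1 * \<bar>eps t \<omega>\<bar> + b1 * eta t \<omega> + g1"

text \<open>Value at time t of the recursion h_s = mu + x_{s-1} h_{s-1}, started n steps
  earlier (at time t - n) from the initial value h0.\<close>
fun garch_from :: "real \<Rightarrow> (int \<Rightarrow> 'a \<Rightarrow> real) \<Rightarrow> ('a \<Rightarrow> real) \<Rightarrow> nat \<Rightarrow> int \<Rightarrow> 'a \<Rightarrow> real" where
  "garch_from mu x h0 0 t \<omega> = h0 \<omega>"
| "garch_from mu x h0 (Suc n) t \<omega> = mu + x (t - 1) \<omega> * garch_from mu x h0 n (t - 1) \<omega>"

text \<open>Aumann expectation of the random interval [lam - del, lam + del]:
  [E lam - E del, E lam + E del].\<close>
definition interval_expectation :: "'a measure \<Rightarrow> ('a \<Rightarrow> real) \<Rightarrow> ('a \<Rightarrow> real) \<Rightarrow> real set" where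
  "interval_expectation M lam del =
     {integral\<^sup>L M lam - integral\<^sup>L M del .. integral\<^sup>L M lam + integral\<^sup>L M del}"

end

theory Submission
  imports Defs
begin


lemma gamma_mean:
  assumes k: "k > 0"
  shows "has_bochner_integral lborel (\<lambda>x. gamma_density k x * x) k"
proof -
  have G: "Gamma (k+1) = nn_integral lborel (\<lambda>t. ennreal (indicator {0..} t * t powr k / exp t))"
    using Gamma_conv_nn_integral_real[of "k+1"] k by simp
  have eq: "gamma_density k x * x = (indicator {0..} x * x powr k / exp x) * (1 / Gamma k)" for x
  proof (cases "x > 0")
    case True
    have "x powr (k - 1) * x = x powr k" using True
      by (simp add: powr_diff)
    then show ?thesis using True unfolding gamma_density_def
      by (simp add: exp_minus indicator_def divide_simps)
  next
    case False
    then show ?thesis unfolding gamma_density_def by (auto simp: indicator_def)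
  qed
  have "(\<integral>\<^sup>+x. ennreal (gamma_density k x * x) \<partial>lborel)
      = (\<integral>\<^sup>+x. ennreal (indicator {0..} x * x powr k / exp x) * ennreal (1 / Gamma k) \<partial>lborel)"
    unfolding eq using k by (intro nn_integral_cong) (auto simp: indicator_def simp flip: ennreal_mult)
  also have "\<dots> = ennreal (Gamma (k+1)) * ennreal (1 / Gamma k)"
    by (subst nn_integral_multc) (auto simp: G)
  also have "\<dots> = ennreal k"
  proof -
    have "Gamma (k+1) = k * Gamma k"
      by (rule Gamma_plus1) (use k in \<open>auto elim!: nonpos_Ints_cases\<close>)
    moreover have "Gamma k \<noteq> 0" using Gamma_real_pos[OF k] by linarith
    ultimately show ?thesis using k by (simp flip: ennreal_mult)
  qed
  finally have nn: "(\<integral>\<^sup>+x. ennreal (gamma_density k x * x) \<partial>lborel) = ennreal k" .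
  show ?thesis
  proof (rule has_bochner_integral_nn_integral[OF _ _ _ nn])
    show "(\<lambda>x. gamma_density k x * x) \<in> borel_measurable lborel"
      unfolding eq by measurable
    show "AE x in lborel. 0 \<le> gamma_density k x * x"
      unfolding eq using k by (auto simp: indicator_def)
  qed (use k in auto)
qed


lemma (in prob_space) indep_var_from_sets:
  assumes ind: "indep_set (sets A) (sets B)" and sA: "space A = space M" and sB: "space B = space M"
    and X: "X \<in> A \<rightarrow>\<^sub>M borel" and Y: "Y \<in> B \<rightarrow>\<^sub>M borel"
    and rX: "random_variable borel X" and rY: "random_variable borel Y"
  shows "indep_var borel X borel Y"
proof -
  have g1: "{X -` S \<inter> space M | S. S \<in> sets borel} \<subseteq> sets A"
    using X sA measurable_sets[OF X] by auto
  have 1: "sigma_sets (space M) {X -` S \<inter> space M | S. S \<in> sets borel} \<subseteq> sets A"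
    using sigma_algebra.sigma_sets_subset[OF sets.sigma_algebra_axioms[of A] g1] sA by simp
  have g2: "{Y -` S \<inter> space M | S. S \<in> sets borel} \<subseteq> sets B"
    using Y sB measurable_sets[OF Y] by auto
  have 2: "sigma_sets (space M) {Y -` S \<inter> space M | S. S \<in> sets borel} \<subseteq> sets B"
    using sigma_algebra.sigma_sets_subset[OF sets.sigma_algebra_axioms[of B] g2] sB by simp
  show ?thesis unfolding indep_var_eq
    using ind 1 2 rX rY unfolding indep_sets2_eq by blast
qed

lemma (in prob_space) indep_var_nn_mult:
  fixes X Y :: "'a \<Rightarrow> real"
  assumes "indep_var borel X borel Y"
  shows "(\<integral>\<^sup>+\<omega>. ennreal (X \<omega>) * ennreal (Y \<omega>) \<partial>M) = (\<integral>\<^sup>+\<omega>. ennreal (X \<omega>) \<partial>M) * (\<integral>\<^sup>+\<omega>. ennreal (Y \<omega>) \<partial>M)"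
proof -
  have m: "(\<lambda>x::real. ennreal x) \<in> borel \<rightarrow>\<^sub>M borel" by measurable
  have i: "indep_var borel ((\<lambda>x. ennreal x) \<circ> X) borel ((\<lambda>x. ennreal x) \<circ> Y)"
    by (rule indep_var_compose[OF assms m m])
  define Z where "Z = case_bool ((\<lambda>x. ennreal x) \<circ> X) ((\<lambda>x. ennreal x) \<circ> Y)"
  have **: "(\<lambda> _. borel) = case_bool borel borel"
    by (rule ext, metis (full_types) bool.simps(3) bool.simps(4))
  have iv: "indep_vars (\<lambda>_. borel) Z UNIV"
    using i unfolding indep_var_def Z_def ** .
  have "(\<integral>\<^sup>+\<omega>. (\<Prod>i\<in>UNIV. Z i \<omega>) \<partial>M) = (\<Prod>i\<in>UNIV. \<integral>\<^sup>+\<omega>. Z i \<omega> \<partial>M)"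
    using iv by (intro indep_vars_nn_integral) (auto simp: Z_def split: bool.split)
  then show ?thesis
    by (simp add: UNIV_bool Z_def mult.commute comp_def)
qed

lemma garch_from_meas:
  assumes h0: "h0 \<in> N \<rightarrow>\<^sub>M borel"
    and e: "\<And>s. s < T \<Longrightarrow> eps s \<in> N \<rightarrow>\<^sub>M borel"
    and n: "\<And>s. s < T \<Longrightarrow> eta s \<in> N \<rightarrow>\<^sub>M borel"
  shows "s \<le> T \<Longrightarrow> garch_from mu (garch_x a1 b1 g1 eps eta) h0 n s \<in> N \<rightarrow>\<^sub>M borel"
proof (induction n arbitrary: s)
  case 0
  then show ?case using h0 by simp
next
  case (Suc n)
  have [measurable]: "eps (s - 1) \<in> N \<rightarrow>\<^sub>M borel" "eta (s - 1) \<in> N \<rightarrow>\<^sub>M borel"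
    using e n Suc.prems by auto
  have [measurable]: "garch_from mu (garch_x a1 b1 g1 eps eta) h0 n (s - 1) \<in> N \<rightarrow>\<^sub>M borel"
    using Suc by auto
  have [measurable]: "garch_x a1 b1 g1 eps eta (s - 1) \<in> N \<rightarrow>\<^sub>M borel"
    unfolding garch_x_def by measurable
  show ?case unfolding garch_from.simps by measurable
qed

lemma (in prob_space) h0_fam_indep:
  fixes Fam :: "'i \<Rightarrow> 'a \<Rightarrow> real" and h0 :: "'a \<Rightarrow> real"
  assumes fam: "indep_vars (\<lambda>_. borel) Fam UNIV"
    and h0m: "h0 \<in> borel_measurable M"
    and ind: "indep_set (sets (vimage_algebra (space M) h0 (borel :: real measure)))
         (sets (vimage_algebra (space M) (\<lambda>\<omega>. restrict (\<lambda>i. Fam i \<omega>) UNIV) (PiM UNIV (\<lambda>_. borel :: real measure))))"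
  shows "indep_sets (case_option {h0 -` A \<inter> space M | A. A \<in> sets (borel :: real measure)}
                      (\<lambda>i. {Fam i -` A \<inter> space M | A. A \<in> sets (borel :: real measure)})) UNIV"
proof -
  define EF where "EF i = {Fam i -` A \<inter> space M | A. A \<in> sets (borel :: real measure)}" for i
  define E0 where "E0 = {h0 -` A \<inter> space M | A. A \<in> sets (borel :: real measure)}"
  define F where "F = (\<lambda>\<omega>. restrict (\<lambda>i. Fam i \<omega>) (UNIV::'i set))"
  define VF where "VF = vimage_algebra (space M) F (PiM UNIV (\<lambda>_. borel :: real measure))"
  have famrv: "random_variable borel (Fam i)" for i
    using fam unfolding indep_vars_def by auto
  have famind: "indep_sets EF UNIV"
    using fam unfolding indep_vars_def EF_def
    by (auto intro: indep_sets_mono_sets sigma_sets.Basic)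
  have prodF: "prob (\<Inter>j\<in>J'. A j) = (\<Prod>j\<in>J'. prob (A j))"
    if "finite J'" "J' \<noteq> {}" "\<forall>j\<in>J'. A j \<in> EF j" for J' A
    using indep_setsD[OF famind _ that(2,1,3)] by simp
  have inF: "(\<Inter>j\<in>J'. A j) \<in> sets VF"
    if f: "finite J'" and ne: "J' \<noteq> {}" and aa: "\<forall>j\<in>J'. A j \<in> EF j" for J' A
  proof (rule sets.finite_INT[OF f ne])
    fix j assume "j \<in> J'"
    then obtain B where B: "B \<in> sets borel" "A j = Fam j -` B \<inter> space M"
      using aa unfolding EF_def by auto
    have "A j = F -` ((\<lambda>f. f j) -` B \<inter> space (PiM UNIV (\<lambda>_. borel :: real measure))) \<inter> space M"
      using B(2) by (auto simp: F_def space_PiM)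
    moreover have "(\<lambda>f. f j) -` B \<inter> space (PiM UNIV (\<lambda>_. borel :: real measure)) \<in> sets (PiM UNIV (\<lambda>_. borel :: real measure))"
      using measurable_sets[OF measurable_component_singleton[of j UNIV "\<lambda>_. borel :: real measure"] B(1)] by simp
    ultimately show "A j \<in> sets VF"
      unfolding VF_def by (metis in_vimage_algebra)
  qed
  have eqEF: "(\<lambda>i. {Fam i -` A \<inter> space M | A. A \<in> sets (borel :: real measure)}) = EF"
    by (rule ext) (simp add: EF_def)
  show ?thesis unfolding E0_def[symmetric] eqEF
  proof (rule indep_setsI)
    fix j :: "'i option"
    show "case_option E0 EF j \<subseteq> events"
      using h0m famrv by (cases j) (auto simp: E0_def EF_def measurable_sets)
  next
    fix A and J :: "'i option set"
    assume J: "J \<noteq> {}" "finite J" and A: "\<forall>j\<in>J. A j \<in> case_option E0 EF j"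
    define J' where "J' = Some -` J"
    have fJ': "finite J'" unfolding J'_def using J(2) by (simp add: finite_vimageI)
    have AJ': "\<forall>j\<in>J'. A (Some j) \<in> EF j" using A unfolding J'_def by auto
    show "prob (\<Inter>j\<in>J. A j) = (\<Prod>j\<in>J. prob (A j))"
    proof (cases "None \<in> J")
      case False
      then have JJ: "J = Some ` J'" unfolding J'_def
        by (auto simp: image_iff) (metis option.exhaust)
      have "J' \<noteq> {}" using J(1) JJ by auto
      then show ?thesis using prodF[OF fJ' _ AJ'] unfolding JJ
        by (simp add: prod.reindex)
    next
      case True
      then have JJ: "J = insert None (Some ` J')" unfolding J'_def
        by (auto simp: image_iff)
      show ?thesis
      proof (cases "J' = {}")
        case True
        then show ?thesis using JJ by simp
      next
        case False
        obtain B where B: "B \<in> sets borel" "A None = h0 -` B \<inter> space M"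
          using A \<open>None \<in> J\<close> unfolding E0_def by fastforce
        have a: "A None \<in> sets (vimage_algebra (space M) h0 (borel :: real measure))"
          using B by (simp add: in_vimage_algebra)
        have "prob (A None \<inter> (\<Inter>j\<in>J'. A (Some j))) = prob (A None) * prob (\<Inter>j\<in>J'. A (Some j))"
          using indep_setD[OF ind a] inF[OF fJ' False AJ'] unfolding VF_def F_def by simp
        also have "\<dots> = prob (A None) * (\<Prod>j\<in>J'. prob (A (Some j)))"
          using prodF[OF fJ' False AJ'] by simp
        moreover have "(\<Prod>j\<in>insert None (Some ` J'). prob (A j)) = prob (A None) * (\<Prod>j\<in>J'. prob (A (Some j)))"
          using fJ' by (subst prod.insert) (auto simp: prod.reindex)
        ultimately show ?thesis unfolding JJ by simp
      qed
    qed
  qed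
qed


lemma meas_sigma_gen:
  assumes "\<And>A. A \<in> sets (borel :: real measure) \<Longrightarrow> f -` A \<inter> \<Omega> \<in> G" and "G \<subseteq> Pow \<Omega>"
  shows "(f :: 'a \<Rightarrow> real) \<in> sigma \<Omega> G \<rightarrow>\<^sub>M borel"
proof (rule measurableI)
  fix A :: "real set" assume "A \<in> sets borel"
  then show "f -` A \<inter> space (sigma \<Omega> G) \<in> sets (sigma \<Omega> G)"
    using assms by (simp add: sets_measure_of space_measure_of sigma_sets.Basic)
qed simp

lemma (in prob_space) x_g_indep:
  fixes eps eta :: "int \<Rightarrow> 'a \<Rightarrow> real" and h0 :: "'a \<Rightarrow> real"
  assumes fam: "indep_vars (\<lambda>_. borel) (\<lambda>i. case i of Inl t \<Rightarrow> eps t | Inr t \<Rightarrow> eta t) (UNIV :: (int + int) set)"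
    and h0m: "h0 \<in> borel_measurable M"
    and ind: "indep_set (sets (vimage_algebra (space M) h0 (borel :: real measure)))
         (sets (vimage_algebra (space M) (\<lambda>\<omega>. restrict (\<lambda>i. case i of Inl t \<Rightarrow> eps t \<omega> | Inr t \<Rightarrow> eta t \<omega>) (UNIV :: (int + int) set)) (PiM UNIV (\<lambda>_. borel :: real measure))))"
    and sT: "s \<le> T"
  shows "indep_var borel (garch_x a1 b1 g1 eps eta T) borel (garch_from mu (garch_x a1 b1 g1 eps eta) h0 n s)"
proof -
  define Fam where "Fam = (\<lambda>i. case i of Inl t \<Rightarrow> eps t | Inr t \<Rightarrow> eta t)"
  have Fam_eq: "(\<lambda>\<omega>. restrict (\<lambda>i. case i of Inl t \<Rightarrow> eps t \<omega> | Inr t \<Rightarrow> eta t \<omega>) (UNIV :: (int + int) set))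
      = (\<lambda>\<omega>. restrict (\<lambda>i. Fam i \<omega>) UNIV)"
    by (rule ext) (simp add: Fam_def fun_eq_iff split: sum.split)
  define E where "E = case_option {h0 -` A \<inter> space M | A. A \<in> sets (borel :: real measure)}
                      (\<lambda>i. {Fam i -` A \<inter> space M | A. A \<in> sets (borel :: real measure)})"
  have indE: "indep_sets E UNIV"
    unfolding E_def by (rule h0_fam_indep) (use fam ind h0m Fam_eq in \<open>simp_all add: Fam_def\<close>)
  define idx :: "int + int \<Rightarrow> int" where "idx = case_sum id id"
  define I where "I j = (if j then Some ` {i. idx i = T} else insert None (Some ` {i. idx i < T}))" for j
  have col: "indep_sets (\<lambda>j. sigma_sets (space M) (\<Union>i\<in>I j. E i)) UNIV"
  proof (rule indep_sets_collect_sigma)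
    show "indep_sets E (\<Union>j\<in>UNIV. I j)" using indE by (rule indep_sets_mono_index[rotated]) simp
    have ist: "Int_stable {f -` A \<inter> space M | A. A \<in> sets (borel::real measure)}" for f :: "'a \<Rightarrow> real"
      apply (auto simp: Int_stable_def)
      apply (rule_tac x="A \<inter> Aa" in exI)
      apply auto
      done
    show "Int_stable (E i)" for i
      unfolding E_def by (cases i) (simp_all add: ist)
    show "disjoint_family_on I UNIV"
      unfolding disjoint_family_on_def I_def by auto
  qed
  define G1 where "G1 = (\<Union>i\<in>I True. E i)"
  define G0 where "G0 = (\<Union>i\<in>I False. E i)"
  have G1P: "G1 \<subseteq> Pow (space M)" and G0P: "G0 \<subseteq> Pow (space M)"
    unfolding G1_def G0_def E_def I_def by (auto split: option.splits)
  have "(\<lambda>j. sigma_sets (space M) (\<Union>i\<in>I j. E i)) = case_bool (sigma_sets (space M) G1) (sigma_sets (space M) G0)"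
    by (rule ext) (simp add: G1_def G0_def split: bool.split)
  with col have indG: "indep_set (sets (sigma (space M) G1)) (sets (sigma (space M) G0))"
    unfolding indep_set_def using G1P G0P by (simp add: sets_measure_of)
  have famrv: "random_variable borel (Fam i)" for i
    using fam unfolding indep_vars_def Fam_def by auto
  have epsrv[measurable]: "eps t \<in> borel_measurable M" for t
    using famrv[of "Inl t"] by (simp add: Fam_def)
  have etarv[measurable]: "eta t \<in> borel_measurable M" for t
    using famrv[of "Inr t"] by (simp add: Fam_def)
  have inG1: "\<And>A. A \<in> sets borel \<Longrightarrow> Fam i -` A \<inter> space M \<in> G1" if "idx i = T" for i
    unfolding G1_def E_def I_def using that by force
  have inG0: "\<And>A. A \<in> sets borel \<Longrightarrow> Fam i -` A \<inter> space M \<in> G0" if "idx i < T" for i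
    unfolding G0_def E_def I_def using that by force
  have [measurable]: "eps T \<in> sigma (space M) G1 \<rightarrow>\<^sub>M borel"
    proof (rule meas_sigma_gen[OF _ G1P])
      fix A :: "real set" assume "A \<in> sets borel"
      then show "eps T -` A \<inter> space M \<in> G1" using inG1[of "Inl T" A] by (simp add: Fam_def idx_def)
    qed
  have [measurable]: "eta T \<in> sigma (space M) G1 \<rightarrow>\<^sub>M borel"
    proof (rule meas_sigma_gen[OF _ G1P])
      fix A :: "real set" assume "A \<in> sets borel"
      then show "eta T -` A \<inter> space M \<in> G1" using inG1[of "Inr T" A] by (simp add: Fam_def idx_def)
    qed
  have X: "garch_x a1 b1 g1 eps eta T \<in> sigma (space M) G1 \<rightarrow>\<^sub>M borel"
    unfolding garch_x_def by measurable
  have Y: "garch_from mu (garch_x a1 b1 g1 eps eta) h0 n s \<in> sigma (space M) G0 \<rightarrow>\<^sub>M borel"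
  proof (rule garch_from_meas[OF _ _ _ sT])
    show "h0 \<in> sigma (space M) G0 \<rightarrow>\<^sub>M borel"
      by (rule meas_sigma_gen[OF _ G0P]) (auto simp: G0_def E_def I_def)
    show "eps s \<in> sigma (space M) G0 \<rightarrow>\<^sub>M borel" if "s < T" for s
    proof (rule meas_sigma_gen[OF _ G0P])
      fix A :: "real set" assume "A \<in> sets borel"
      then show "eps s -` A \<inter> space M \<in> G0" using inG0[of "Inl s" A] that by (simp add: Fam_def idx_def)
    qed
    show "eta s \<in> sigma (space M) G0 \<rightarrow>\<^sub>M borel" if "s < T" for s
    proof (rule meas_sigma_gen[OF _ G0P])
      fix A :: "real set" assume "A \<in> sets borel"
      then show "eta s -` A \<inter> space M \<in> G0" using inG0[of "Inr s" A] that by (simp add: Fam_def idx_def)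
    qed
  qed
  have gm: "garch_from mu (garch_x a1 b1 g1 eps eta) h0 n s \<in> borel_measurable M"
    by (rule garch_from_meas[OF h0m _ _ order.refl]) auto
  have xm: "garch_x a1 b1 g1 eps eta T \<in> borel_measurable M"
    unfolding garch_x_def by measurable
  show ?thesis
    by (rule indep_var_from_sets[OF indG _ _ X Y])
       (use G1P G0P gm xm in \<open>auto simp: space_measure_of\<close>)
qed



theorem theorem1:
  fixes M :: "'a measure"
    and eps eta h :: "int \<Rightarrow> 'a \<Rightarrow> real"
    and mu a1 b1 g1 k :: real
  assumes "prob_space M"
    and "mu > 0" and "a1 > 0" and "b1 > 0" and "g1 > 0" and "k > 0"
    \<comment> \<open>eps_t i.i.d. N(0,1), eta_t i.i.d. Gamma(k,1), the two sequences mutually independent\<close>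
    and "\<And>t. distributed M lborel (eps t) std_normal_density"
    and "\<And>t. distributed M lborel (eta t) (gamma_density k)"
    and "prob_space.indep_vars M (\<lambda>_. borel)
           (\<lambda>i. case i of Inl t \<Rightarrow> eps t | Inr t \<Rightarrow> eta t) (UNIV :: (int + int) set)"
    \<comment> \<open>h_s measurable, (eps_t, eta_t) independent of {h_s : s <= t}\<close>
    and "\<And>t. h t \<in> borel_measurable M"
    and "\<And>t. prob_space.indep_set M
           (sets (vimage_algebra (space M) (\<lambda>\<omega>. (eps t \<omega>, eta t \<omega>)) (borel :: (real \<times> real) measure)))
           (sets (vimage_algebra (space M) (\<lambda>\<omega>. restrict (\<lambda>s. h s \<omega>) {..t})
                   (PiM {..t} (\<lambda>_. borel :: real measure))))"
    \<comment> \<open>recursion h_t = mu + alpha1 |lambda_{t-1}| + beta1 delta_{t-1} + gamma1 h_{t-1}\<close>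
    and "\<And>t. AE \<omega> in M. h t \<omega> = mu + a1 * \<bar>h (t - 1) \<omega> * eps (t - 1) \<omega>\<bar>
                             + b1 * (h (t - 1) \<omega> * eta (t - 1) \<omega>) + g1 * h (t - 1) \<omega>"
    \<comment> \<open>started in the infinite past from an initial value with finite expectation\<close>
    and "\<exists>h0. h0 \<in> borel_measurable M \<and> integrable M h0 \<and> (\<forall>\<omega>\<in>space M. h0 \<omega> \<ge> 0)
           \<and> prob_space.indep_set M (sets (vimage_algebra (space M) h0 (borel :: real measure)))
               (sets (vimage_algebra (space M)
                  (\<lambda>\<omega>. restrict (\<lambda>i. case i of Inl t \<Rightarrow> eps t \<omega> | Inr t \<Rightarrow> eta t \<omega>) (UNIV :: (int + int) set))
                  (PiM UNIV (\<lambda>_. borel :: real measure))))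
           \<and> (\<forall>t. AE \<omega> in M.
                 (\<lambda>n. garch_from mu (garch_x a1 b1 g1 eps eta) h0 n t \<omega>) \<longlonglongrightarrow> h t \<omega>)"
  shows "\<forall>t. ((\<integral>\<^sup>+ \<omega>. ennreal (h t \<omega>) \<partial>M) < \<infinity>
              \<longleftrightarrow> integral\<^sup>L M (garch_x a1 b1 g1 eps eta t) < 1)
          \<and> integral\<^sup>L M (garch_x a1 b1 g1 eps eta t) = a1 * sqrt (2 / pi) + b1 * k + g1
          \<and> (a1 * sqrt (2 / pi) + b1 * k + g1 < 1 \<longrightarrow>
               integral\<^sup>L M (h t) = mu / (1 - a1 * sqrt (2 / pi) - b1 * k - g1)
             \<and> interval_expectation M (\<lambda>\<omega>. h t \<omega> * eps t \<omega>) (\<lambda>\<omega>. h t \<omega> * eta t \<omega>)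
                 = {- (k * integral\<^sup>L M (h t)) .. k * integral\<^sup>L M (h t)})"
proof -
  interpret P: prob_space M by fact
  note mu = assms(2) and a1 = assms(3) and b1 = assms(4) and g1 = assms(5) and k = assms(6)
  define x where "x = garch_x a1 b1 g1 eps eta"
  define c where "c = a1 * sqrt (2 / pi) + b1 * k + g1"
  have c_pos: "c > 0" unfolding c_def using a1 b1 g1 k by (simp add: add_pos_pos)
  have epsm[measurable]: "eps t \<in> borel_measurable M" for t
    using distributed_measurable[OF assms(7)[of t]] by simp
  have etam[measurable]: "eta t \<in> borel_measurable M" for t
    using distributed_measurable[OF assms(8)[of t]] by simp
  have hm[measurable]: "h t \<in> borel_measurable M" for t by (rule assms(10))
  have xm[measurable]: "x t \<in> borel_measurable M" for t
    unfolding x_def garch_x_def by measurable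
  have n1: "has_bochner_integral lborel (\<lambda>x. std_normal_density x * \<bar>x\<bar>) (sqrt (2/pi))"
    using std_normal_moment_abs_odd[of 0] by simp
  have n0: "has_bochner_integral lborel (\<lambda>x. std_normal_density x * x) 0"
    using std_normal_moment_odd[of 0] by simp
  have gd_nn: "0 \<le> gamma_density k x" for x
    unfolding gamma_density_def using k by auto
  have int_aeps: "integrable M (\<lambda>\<omega>. \<bar>eps t \<omega>\<bar>)" for t
    using distributed_integrable[OF assms(7)[of t], of abs] n1 by (simp add: has_bochner_integral_iff)
  have E_aeps: "integral\<^sup>L M (\<lambda>\<omega>. \<bar>eps t \<omega>\<bar>) = sqrt (2/pi)" for t
    using distributed_integral[OF assms(7)[of t], of abs] n1 by (simp add: has_bochner_integral_iff)
  have int_eps: "integrable M (eps t)" for t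
    using distributed_integrable[OF assms(7)[of t], of "\<lambda>x. x"] n0 by (simp add: has_bochner_integral_iff)
  have E_eps: "integral\<^sup>L M (eps t) = 0" for t
    using distributed_integral[OF assms(7)[of t], of "\<lambda>x. x"] n0 by (simp add: has_bochner_integral_iff)
  have int_eta: "integrable M (eta t)" for t
    using distributed_integrable[OF assms(8)[of t], of "\<lambda>x. x"] gamma_mean[OF k] gd_nn
    by (simp add: has_bochner_integral_iff)
  have E_eta: "integral\<^sup>L M (eta t) = k" for t
    using distributed_integral[OF assms(8)[of t], of "\<lambda>x. x"] gamma_mean[OF k] gd_nn
    by (simp add: has_bochner_integral_iff)
  have int_x: "integrable M (x t)" for t
    unfolding x_def garch_x_def using int_aeps int_eta by auto
  have E_x: "integral\<^sup>L M (x t) = c" for t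
    unfolding x_def garch_x_def c_def using int_aeps int_eta E_aeps E_eta
    by (simp add: P.prob_space)
  have eta_nn: "AE \<omega> in M. 0 \<le> eta t \<omega>" for t
  proof -
    have "AE x in lborel. 0 < ennreal (gamma_density k x) \<longrightarrow> 0 \<le> x"
      by (rule AE_I2) (auto simp: gamma_density_def split: if_splits)
    then show ?thesis using P.distributed_AE2[OF assms(8)[of t], of "\<lambda>x. 0 \<le> x"] by simp
  qed
  have x_nn: "AE \<omega> in M. \<forall>t. 0 \<le> x t \<omega>"
  proof -
    have "AE \<omega> in M. \<forall>t. 0 \<le> eta t \<omega>" using eta_nn by (simp add: AE_all_countable)
    then show ?thesis
      by eventually_elim (use a1 b1 g1 in \<open>auto simp: x_def garch_x_def intro!: add_nonneg_nonneg\<close>)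
  qed
  obtain h0 where h0m[measurable]: "h0 \<in> borel_measurable M" and h0int: "integrable M h0"
    and h0nn: "\<forall>\<omega>\<in>space M. h0 \<omega> \<ge> 0"
    and h0ind: "P.indep_set (sets (vimage_algebra (space M) h0 (borel :: real measure)))
               (sets (vimage_algebra (space M)
                  (\<lambda>\<omega>. restrict (\<lambda>i. case i of Inl t \<Rightarrow> eps t \<omega> | Inr t \<Rightarrow> eta t \<omega>) (UNIV :: (int + int) set))
                  (PiM UNIV (\<lambda>_. borel :: real measure))))"
    and h0lim: "\<forall>t. AE \<omega> in M. (\<lambda>n. garch_from mu (garch_x a1 b1 g1 eps eta) h0 n t \<omega>) \<longlonglongrightarrow> h t \<omega>"
    using assms(13) by blast
  define g where "g n t = garch_from mu x h0 n t" for n t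
  have gm[measurable]: "g n t \<in> borel_measurable M" for n t
    unfolding g_def x_def by (rule garch_from_meas[OF h0m _ _ order.refl]) auto
  have g_Suc: "g (Suc n) t \<omega> = mu + x (t - 1) \<omega> * g n (t - 1) \<omega>" for n t \<omega>
    by (simp add: g_def)
  have g_nn: "AE \<omega> in M. \<forall>n t. 0 \<le> g n t \<omega>"
    using x_nn AE_space
  proof eventually_elim
    case (elim \<omega>)
    show ?case
    proof
      fix n show "\<forall>t. 0 \<le> g n t \<omega>"
        by (induction n) (use elim h0nn mu in \<open>auto simp: g_Suc g_def intro!: add_nonneg_nonneg\<close>)
    qed
  qed
  have h_lim: "AE \<omega> in M. \<forall>t. (\<lambda>n. g n t \<omega>) \<longlonglongrightarrow> h t \<omega>"
    using h0lim unfolding g_def x_def by (simp add: AE_all_countable)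
  have h_nn: "AE \<omega> in M. \<forall>t. 0 \<le> h t \<omega>"
    using h_lim g_nn
  proof eventually_elim
    case (elim \<omega>)
    show ?case
    proof
      fix t show "0 \<le> h t \<omega>"
        by (rule LIMSEQ_le_const[OF elim(1)[rule_format, of t]]) (use elim(2) in auto)
    qed
  qed
  have rec: "AE \<omega> in M. h t \<omega> = mu + x (t - 1) \<omega> * h (t - 1) \<omega>" for t
    using assms(12)[of t] h_nn
  proof eventually_elim
    case (elim \<omega>)
    then have "0 \<le> h (t - 1) \<omega>" by auto
    then show ?case using elim(1)
      by (simp add: x_def garch_x_def abs_mult algebra_simps)
  qed
  have indep_gen: "P.indep_var borel (\<lambda>\<omega>. \<phi> (eps t \<omega>, eta t \<omega>)) borel (h t)"
    if phi: "\<phi> \<in> borel_measurable borel" for \<phi> :: "real \<times> real \<Rightarrow> real" and t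
  proof (rule P.indep_var_from_sets[OF assms(11)[of t]])
    let ?P = "\<lambda>\<omega>. (eps t \<omega>, eta t \<omega>)"
    let ?Q = "\<lambda>\<omega>. restrict (\<lambda>s. h s \<omega>) {..t}"
    have "?P \<in> vimage_algebra (space M) ?P borel \<rightarrow>\<^sub>M borel"
      by (rule measurable_vimage_algebra1) auto
    then show "(\<lambda>\<omega>. \<phi> (eps t \<omega>, eta t \<omega>)) \<in> vimage_algebra (space M) ?P borel \<rightarrow>\<^sub>M borel"
      using phi by (rule measurable_compose)
    have "?Q \<in> vimage_algebra (space M) ?Q (PiM {..t} (\<lambda>_. borel :: real measure)) \<rightarrow>\<^sub>M PiM {..t} (\<lambda>_. borel :: real measure)"
      by (rule measurable_vimage_algebra1) (auto simp: space_PiM)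
    then have "(\<lambda>\<omega>. ?Q \<omega> t) \<in> vimage_algebra (space M) ?Q (PiM {..t} (\<lambda>_. borel :: real measure)) \<rightarrow>\<^sub>M borel"
      by (rule measurable_compose) (rule measurable_component_singleton, simp)
    then show "h t \<in> vimage_algebra (space M) ?Q (PiM {..t} (\<lambda>_. borel :: real measure)) \<rightarrow>\<^sub>M borel"
      by simp
    have "(\<lambda>\<omega>. (eps t \<omega>, eta t \<omega>)) \<in> M \<rightarrow>\<^sub>M borel \<Otimes>\<^sub>M borel" by measurable
    then have "(\<lambda>\<omega>. (eps t \<omega>, eta t \<omega>)) \<in> M \<rightarrow>\<^sub>M borel" by (simp add: borel_prod)
    from measurable_compose[OF this phi]
    show "(\<lambda>\<omega>. \<phi> (eps t \<omega>, eta t \<omega>)) \<in> borel_measurable M" by simp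
  qed auto
  have "(\<lambda>p::real \<times> real. a1 * \<bar>fst p\<bar> + b1 * snd p + g1) \<in> borel \<Otimes>\<^sub>M borel \<rightarrow>\<^sub>M borel"
    by measurable
  then have phix: "(\<lambda>p::real \<times> real. a1 * \<bar>fst p\<bar> + b1 * snd p + g1) \<in> borel_measurable borel"
    by (simp add: borel_prod)
  have ind_xh: "P.indep_var borel (x t) borel (h t)" for t
  proof -
    have "x t = (\<lambda>\<omega>. a1 * \<bar>eps t \<omega>\<bar> + b1 * eta t \<omega> + g1)"
      by (simp add: fun_eq_iff x_def garch_x_def)
    then show ?thesis using indep_gen[OF phix, of t] by simp
  qed
  have ind_eps: "P.indep_var borel (eps t) borel (h t)" for t
  proof -
    have "fst \<in> borel_measurable (borel :: (real \<times> real) measure)"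
      using measurable_fst[of "borel :: real measure" "borel :: real measure"] by (simp add: borel_prod)
    then show ?thesis using indep_gen[of fst t] by simp
  qed
  have ind_eta: "P.indep_var borel (eta t) borel (h t)" for t
  proof -
    have "snd \<in> borel_measurable (borel :: (real \<times> real) measure)"
      using measurable_snd[of "borel :: real measure" "borel :: real measure"] by (simp add: borel_prod)
    then show ?thesis using indep_gen[of snd t] by simp
  qed
  have ind_xg: "P.indep_var borel (x t) borel (g n t)" for t n
    unfolding x_def g_def
    by (rule P.x_g_indep[OF _ h0m h0ind order.refl]) (use assms(9) in simp)
  have nnx: "(\<integral>\<^sup>+\<omega>. ennreal (x t \<omega>) \<partial>M) = ennreal c" for t
    using nn_integral_eq_integral[OF int_x] x_nn E_x by (simp add: AE_all_countable)
  have nn_step: "(\<integral>\<^sup>+\<omega>. ennreal (mu + x t \<omega> * Y \<omega>) \<partial>M) = ennreal mu + ennreal c * (\<integral>\<^sup>+\<omega>. ennreal (Y \<omega>) \<partial>M)"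
    if ind: "P.indep_var borel (x t) borel Y" and Ym: "Y \<in> borel_measurable M"
      and Ynn: "AE \<omega> in M. 0 \<le> Y \<omega>" for t Y
  proof -
    have "(\<integral>\<^sup>+\<omega>. ennreal (mu + x t \<omega> * Y \<omega>) \<partial>M) = (\<integral>\<^sup>+\<omega>. ennreal mu + ennreal (x t \<omega>) * ennreal (Y \<omega>) \<partial>M)"
      using Ynn x_nn
    proof (intro nn_integral_cong_AE, eventually_elim)
      case (elim \<omega>)
      then show ?case using mu by (simp add: ennreal_plus ennreal_mult)
    qed
    also have "\<dots> = (\<integral>\<^sup>+\<omega>. ennreal mu \<partial>M) + (\<integral>\<^sup>+\<omega>. ennreal (x t \<omega>) * ennreal (Y \<omega>) \<partial>M)"
      using Ym by (intro nn_integral_add) auto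
    also have "\<dots> = ennreal mu + ennreal c * (\<integral>\<^sup>+\<omega>. ennreal (Y \<omega>) \<partial>M)"
      using P.indep_var_nn_mult[OF ind] nnx by (simp add: P.emeasure_space_1)
    finally show ?thesis .
  qed
  have nn_h: "(\<integral>\<^sup>+\<omega>. ennreal (h t \<omega>) \<partial>M) = ennreal mu + ennreal c * (\<integral>\<^sup>+\<omega>. ennreal (h (t - 1) \<omega>) \<partial>M)" for t
  proof -
    have "(\<integral>\<^sup>+\<omega>. ennreal (h t \<omega>) \<partial>M) = (\<integral>\<^sup>+\<omega>. ennreal (mu + x (t - 1) \<omega> * h (t - 1) \<omega>) \<partial>M)"
      using rec[of t] by (intro nn_integral_cong_AE) auto
    also have "\<dots> = ennreal mu + ennreal c * (\<integral>\<^sup>+\<omega>. ennreal (h (t - 1) \<omega>) \<partial>M)"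
      by (rule nn_step[OF ind_xh]) (use h_nn in \<open>auto simp: AE_all_countable\<close>)
    finally show ?thesis .
  qed
  have nn_g: "(\<integral>\<^sup>+\<omega>. ennreal (g (Suc n) t \<omega>) \<partial>M) = ennreal mu + ennreal c * (\<integral>\<^sup>+\<omega>. ennreal (g n (t - 1) \<omega>) \<partial>M)" for n t
    unfolding g_Suc
    by (rule nn_step[OF ind_xg]) (use g_nn in auto)
  have case_ge: "(\<integral>\<^sup>+\<omega>. ennreal (h t \<omega>) \<partial>M) = \<top>" if c1: "c \<ge> 1" for t
  proof -
    have lb: "\<forall>t. of_nat n * ennreal mu \<le> (\<integral>\<^sup>+\<omega>. ennreal (h t \<omega>) \<partial>M)" for n
    proof (induction n)
      case 0 show ?case by simp
    next
      case (Suc n)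
      show ?case
      proof
        fix t
        have c1': "1 \<le> ennreal c" using c1 by simp
        have "of_nat (Suc n) * ennreal mu = ennreal mu + of_nat n * ennreal mu"
          by (simp add: algebra_simps)
        also have "\<dots> \<le> ennreal mu + (\<integral>\<^sup>+\<omega>. ennreal (h (t - 1) \<omega>) \<partial>M)"
          using Suc.IH by (intro add_left_mono) auto
        also have "\<dots> \<le> ennreal mu + ennreal c * (\<integral>\<^sup>+\<omega>. ennreal (h (t - 1) \<omega>) \<partial>M)"
          using mult_right_mono[OF c1', of "\<integral>\<^sup>+\<omega>. ennreal (h (t - 1) \<omega>) \<partial>M"]
          by (intro add_left_mono) simp
        also have "\<dots> = (\<integral>\<^sup>+\<omega>. ennreal (h t \<omega>) \<partial>M)" using nn_h[of t] by simp
        finally show "of_nat (Suc n) * ennreal mu \<le> (\<integral>\<^sup>+\<omega>. ennreal (h t \<omega>) \<partial>M)" .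
      qed
    qed
    show ?thesis
    proof (rule ccontr)
      assume ne: "(\<integral>\<^sup>+\<omega>. ennreal (h t \<omega>) \<partial>M) \<noteq> \<top>"
      then obtain r where r: "(\<integral>\<^sup>+\<omega>. ennreal (h t \<omega>) \<partial>M) = ennreal r" "0 \<le> r"
        by (cases "(\<integral>\<^sup>+\<omega>. ennreal (h t \<omega>) \<partial>M)" rule: ennreal_cases) auto
      obtain n where n: "r / mu < real n" using reals_Archimedean2 by blast
      then have lt: "r < real n * mu" using mu by (simp add: field_simps)
      have "of_nat n * ennreal mu \<le> ennreal r" using lb[of n] r(1) by metis
      then have "ennreal (real n * mu) \<le> ennreal r"
        using mu by (simp add: ennreal_mult ennreal_of_nat_eq_real_of_nat)
      then have "real n * mu \<le> r" using r by (simp add: ennreal_le_iff)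
      with lt show False by simp
    qed
  qed
  have xg: "garch_x a1 b1 g1 eps eta = x" by (simp add: x_def)
  have ceq: "a1 * sqrt (2 / pi) + b1 * k + g1 = c" by (simp add: c_def)
  show ?thesis
  proof (cases "c < 1")
    case False
    then have "c \<ge> 1" by simp
    then show ?thesis using case_ge E_x unfolding xg ceq by auto
  next
    case c1: True
    define e0 where "e0 = integral\<^sup>L M h0"
    have h0ae: "AE \<omega> in M. 0 \<le> h0 \<omega>" by (rule AE_I2) (simp add: h0nn)
    have e0_nn: "0 \<le> e0" unfolding e0_def using h0ae by (rule integral_nonneg_AE)
    have nn_h0: "(\<integral>\<^sup>+\<omega>. ennreal (h0 \<omega>) \<partial>M) = ennreal e0"
      unfolding e0_def by (rule nn_integral_eq_integral[OF h0int h0ae])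
    define L where "L = mu / (1 - c)"
    have L_nn: "0 \<le> L" unfolding L_def using mu c1 by simp
    have muL: "mu = L * (1 - c)" unfolding L_def using c1 by simp
    define B where "B = L + e0"
    have B_nn: "0 \<le> B" unfolding B_def using L_nn e0_nn by simp
    have BB: "mu + c * B \<le> B"
    proof -
      have "0 \<le> (1 - c) * e0" using c1 e0_nn by simp
      then show ?thesis unfolding B_def using muL by (simp add: algebra_simps)
    qed
    have gbound: "\<forall>t. (\<integral>\<^sup>+\<omega>. ennreal (g n t \<omega>) \<partial>M) \<le> ennreal B" for n
    proof (induction n)
      case 0
      show ?case using nn_h0 e0_nn L_nn by (simp add: g_def B_def)
    next
      case (Suc n)
      show ?case
      proof
        fix t
        have "(\<integral>\<^sup>+\<omega>. ennreal (g (Suc n) t \<omega>) \<partial>M) = ennreal mu + ennreal c * (\<integral>\<^sup>+\<omega>. ennreal (g n (t - 1) \<omega>) \<partial>M)"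
          by (rule nn_g)
        also have "\<dots> \<le> ennreal mu + ennreal c * ennreal B"
          using Suc.IH by (intro add_left_mono mult_left_mono) auto
        also have "\<dots> = ennreal (mu + c * B)"
          using mu c_pos B_nn by (simp add: ennreal_mult ennreal_plus)
        also have "\<dots> \<le> ennreal B" using BB by (rule ennreal_leI)
        finally show "(\<integral>\<^sup>+\<omega>. ennreal (g (Suc n) t \<omega>) \<partial>M) \<le> ennreal B" .
      qed
    qed
    have hbound: "(\<integral>\<^sup>+\<omega>. ennreal (h t \<omega>) \<partial>M) \<le> ennreal B" for t
    proof -
      have "(\<integral>\<^sup>+\<omega>. ennreal (h t \<omega>) \<partial>M) = (\<integral>\<^sup>+\<omega>. liminf (\<lambda>n. ennreal (g n t \<omega>)) \<partial>M)"
        using h_lim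
      proof (intro nn_integral_cong_AE, eventually_elim)
        case (elim \<omega>)
        have "(\<lambda>n. ennreal (g n t \<omega>)) \<longlonglongrightarrow> ennreal (h t \<omega>)"
          using elim by (intro tendsto_ennrealI) auto
        then show ?case by (simp add: lim_imp_Liminf)
      qed
      also have "\<dots> \<le> liminf (\<lambda>n. \<integral>\<^sup>+\<omega>. ennreal (g n t \<omega>) \<partial>M)"
        by (rule nn_integral_liminf) measurable
      also have "\<dots> \<le> liminf (\<lambda>n. ennreal B)"
        by (rule Liminf_mono) (use gbound in auto)
      also have "\<dots> = ennreal B" by (simp add: Liminf_const)
      finally show ?thesis .
    qed
    have hint: "integrable M (h t)" for t
    proof (rule integrableI_bounded)
      have "(\<integral>\<^sup>+\<omega>. ennreal (norm (h t \<omega>)) \<partial>M) = (\<integral>\<^sup>+\<omega>. ennreal (h t \<omega>) \<partial>M)"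
        using h_nn by (intro nn_integral_cong_AE) auto
      also have "\<dots> < \<infinity>" using hbound[of t] by (simp add: le_less_trans)
      finally show "(\<integral>\<^sup>+\<omega>. ennreal (norm (h t \<omega>)) \<partial>M) < \<infinity>" .
    qed simp
    have h_ae: "AE \<omega> in M. 0 \<le> h t \<omega>" for t using h_nn by auto
    have nn_hE: "(\<integral>\<^sup>+\<omega>. ennreal (h t \<omega>) \<partial>M) = ennreal (integral\<^sup>L M (h t))" for t
      by (rule nn_integral_eq_integral[OF hint h_ae])
    have Eh_nn: "0 \<le> integral\<^sup>L M (h t)" for t by (rule integral_nonneg_AE[OF h_ae])
    have Eh_le: "integral\<^sup>L M (h t) \<le> B" for t
      using hbound[of t] B_nn unfolding nn_hE by (simp add: ennreal_le_iff)
    have Eh_rec: "integral\<^sup>L M (h t) = mu + c * integral\<^sup>L M (h (t - 1))" for t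
    proof -
      have "ennreal (integral\<^sup>L M (h t)) = ennreal (mu + c * integral\<^sup>L M (h (t - 1)))"
        using nn_h[of t] unfolding nn_hE using mu c_pos Eh_nn[of "t - 1"]
        by (simp add: ennreal_mult ennreal_plus)
      then show ?thesis using Eh_nn[of t] Eh_nn[of "t - 1"] mu c_pos
        by (subst (asm) ennreal_inj) auto
    qed
    define K where "K = B + L"
    have Dn: "\<forall>t. \<bar>integral\<^sup>L M (h t) - L\<bar> \<le> c ^ n * K" for n
    proof (induction n)
      case 0
      show ?case
      proof
        fix t
        show "\<bar>integral\<^sup>L M (h t) - L\<bar> \<le> c ^ 0 * K"
          using Eh_nn[of t] Eh_le[of t] L_nn B_nn unfolding K_def by simp
      qed
    next
      case (Suc n)
      show ?case
      proof
        fix t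
        have "integral\<^sup>L M (h t) - L = c * (integral\<^sup>L M (h (t - 1)) - L)"
          using Eh_rec[of t] muL by (simp add: algebra_simps)
        then have "\<bar>integral\<^sup>L M (h t) - L\<bar> = c * \<bar>integral\<^sup>L M (h (t - 1)) - L\<bar>"
          using c_pos by (simp add: abs_mult)
        also have "\<dots> \<le> c * (c ^ n * K)"
          using Suc.IH c_pos by (intro mult_left_mono) auto
        finally show "\<bar>integral\<^sup>L M (h t) - L\<bar> \<le> c ^ Suc n * K" by simp
      qed
    qed
    have lim0: "(\<lambda>n. c ^ n * K) \<longlonglongrightarrow> 0"
    proof -
      have "(\<lambda>n. c ^ n * K) \<longlonglongrightarrow> 0 * K"
        using c1 c_pos by (intro tendsto_intros) auto
      then show ?thesis by simp
    qed
    have EhL: "integral\<^sup>L M (h t) = L" for t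
    proof -
      have "\<bar>integral\<^sup>L M (h t) - L\<bar> \<le> 0"
        by (rule LIMSEQ_le_const[OF lim0]) (use Dn in auto)
      then show ?thesis by simp
    qed
    have I1: "integral\<^sup>L M (\<lambda>\<omega>. h t \<omega> * eps t \<omega>) = 0" for t
      using P.indep_var_lebesgue_integral[OF ind_eps int_eps hint] E_eps
      by (simp add: mult.commute)
    have I2: "integral\<^sup>L M (\<lambda>\<omega>. h t \<omega> * eta t \<omega>) = k * integral\<^sup>L M (h t)" for t
      using P.indep_var_lebesgue_integral[OF ind_eta int_eta hint] E_eta
      by (simp add: mult.commute)
    have Lc: "L = mu / (1 - a1 * sqrt (2 / pi) - b1 * k - g1)"
      unfolding L_def c_def by (simp add: algebra_simps)
    have A: "((\<integral>\<^sup>+\<omega>. ennreal (h t \<omega>) \<partial>M) < \<infinity>) = (integral\<^sup>L M (x t) < 1)" for t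
      using nn_hE[of t] c1 E_x by simp
    have C: "integral\<^sup>L M (h t) = mu / (1 - a1 * sqrt (2 / pi) - b1 * k - g1)" for t
      using EhL Lc by simp
    have D: "interval_expectation M (\<lambda>\<omega>. h t \<omega> * eps t \<omega>) (\<lambda>\<omega>. h t \<omega> * eta t \<omega>) =
          {- (k * integral\<^sup>L M (h t))..k * integral\<^sup>L M (h t)}" for t
      unfolding interval_expectation_def I1 I2 by simp
    show ?thesis unfolding xg ceq using A E_x C D by blast
  qed
qed


end
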